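(* For every integer $n\ge4$ there is an antiprismatic octahedron $AP_{3,4}^n$ in hyperbolic space: there is a compact regular octahedron $Q$, concentric with the $n$-akis truncated octahedron $KP_{3,4}^n$ which tiles $\mathbb{H}^3$ and lying inside it with its faces parallel to the hexagonal faces of $KP_{3,4}^n$, such that the regular antiprisms attached to the faces of $Q$ are symmetric with respect to the reflection-rotations at the hexagonal faces of $KP_{3,4}^n$.
   Context: $KP_{3,4}^n$ is a hyperbolic truncated octahedron (regular square and hexagonal faces) with pyramids $PY_4^n$ (regular square base, dihedral angle $2\pi/n$ between adjacent triangular sides, rotationally symmetric) glued to its square faces, with dimensions chosen so that $\alpha+2\beta+2\gamma=2\pi$ ($\alpha$: angle between hexagonal faces, $\beta$: between square and hexagonal faces, $\gamma$: between base and side of the pyramid); it is then a fundamental domain for the group $R_{3,4}^n$ generated by reflection-rotations: reflection in the plane of a hexagonal face followed by rotation by $\pi/3$ about the axis perpendicular through the center of that face. A regular antiprism over a face $F$ of $Q$ has $F$ as bottom, a top triangle $F'$, and lateral faces which are equilateral triangles with all edges of the same length as the edges of $F$; "symmetric" means $F'$ is the image of $F$ under the reflection-rotation at the corresponding hexagonal face. The antiprismatic octahedron $AP_{3,4}^n$ is the union of the images of the lateral triangles under $R_{3,4}^n$. *)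

theory Defs
  imports "HOL-Analysis.Analysis"
begin

text \<open>Points of Minkowski space R^{1,3} are pairs (time coordinate, spatial vector in R^3).\<close>
type_synonym mpt = "real \<times> (real^3)"

definition mink :: "mpt \<Rightarrow> mpt \<Rightarrow> real" where
  "mink x y = - fst x * fst y + snd x \<bullet> snd y"

definition hyp :: "mpt set" where
  "hyp = {x. mink x x = -1 \<and> fst x > 0}"

definition hdist :: "mpt \<Rightarrow> mpt \<Rightarrow> real" where
  "hdist x y = arcosh (- mink x y)"

definition hpoint :: "real^3 \<Rightarrow> mpt" where
  "hpoint v = (sqrt (1 + v \<bullet> v), v)"

definition horigin :: mpt where
  "horigin = (1, 0)"

definition v3 :: "real \<Rightarrow> real \<Rightarrow> real \<Rightarrow> real^3" where
  "v3 a b c = vector [a, b, c]"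

text \<open>Hyperbolic (geodesic) convex hull: hyperboloid intersected with the cone over the
  Euclidean convex hull.\<close>
definition hconv :: "mpt set \<Rightarrow> mpt set" where
  "hconv V = hyp \<inter> {c *\<^sub>R y | c y. 0 \<le> c \<and> y \<in> convex hull V}"

text \<open>Outward unit (spacelike) normal of the hyperbolic plane through a, b, c,
  oriented so that the reference point d lies strictly on the inner side.\<close>
definition outer_normal :: "mpt \<Rightarrow> mpt \<Rightarrow> mpt \<Rightarrow> mpt \<Rightarrow> mpt" where
  "outer_normal a b c d = (THE \<nu>. mink \<nu> \<nu> = 1 \<and> mink \<nu> a = 0 \<and> mink \<nu> b = 0
      \<and> mink \<nu> c = 0 \<and> mink \<nu> d < 0)"

text \<open>Interior dihedral angle between two faces of a convex region with outward unit
  normals nu1, nu2.\<close>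
definition dihedral :: "mpt \<Rightarrow> mpt \<Rightarrow> real" where
  "dihedral nu1 nu2 = arccos (- mink nu1 nu2)"

definition hrefl :: "mpt \<Rightarrow> mpt \<Rightarrow> mpt" where
  "hrefl \<nu> x = x - (2 * mink x \<nu>) *\<^sub>R \<nu>"

text \<open>Rotation by angle th about the axis through the origin with unit spatial direction u
  (Rodrigues' formula on the spatial part).\<close>
definition hrot :: "real^3 \<Rightarrow> real \<Rightarrow> mpt \<Rightarrow> mpt" where
  "hrot u th x = (fst x, cos th *\<^sub>R snd x + sin th *\<^sub>R cross3 u (snd x)
                        + ((1 - cos th) * (u \<bullet> snd x)) *\<^sub>R u)"

text \<open>Signed permutations of coordinates (the full octahedral group), acting on the spatial part.\<close>
definition oct_group :: "(real^3 \<Rightarrow> real^3) set" where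
  "oct_group = {f. \<exists>\<pi> s. bij (\<pi> :: 3 \<Rightarrow> 3) \<and> (\<forall>i. s i = 1 \<or> s i = -1)
                      \<and> f = (\<lambda>x. \<chi> i. s i * x $ \<pi> i)}"

definition sign_vecs :: "(real^3) set" where
  "sign_vecs = {\<sigma>. \<forall>i. \<sigma> $ i = 1 \<or> \<sigma> $ i = -1}"

text \<open>Truncated octahedron centred at the origin with octahedral symmetry: the hyperbolic convex
  hull of the 24 points whose spatial coordinates are the signed permutations of (p, q, 0),
  0 < q < p.  Hexagonal faces are orthogonal to the directions (+-1,+-1,+-1), square faces to
  the coordinate axes.\<close>
definition to_verts :: "real \<Rightarrow> real \<Rightarrow> mpt set" where
  "to_verts p q = {hpoint v | v. \<exists>i j k. i \<noteq> j \<and> j \<noteq> k \<and> i \<noteq> k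
        \<and> \<bar>v $ i\<bar> = p \<and> \<bar>v $ j\<bar> = q \<and> v $ k = 0}"

definition trunc_oct :: "real \<Rightarrow> real \<Rightarrow> mpt set" where
  "trunc_oct p q = hconv (to_verts p q)"

text \<open>All faces regular: hexagon-hexagon edges and hexagon-square edges have the same length
  (the angles of the faces are equal by the octahedral symmetry).\<close>
definition to_regular :: "real \<Rightarrow> real \<Rightarrow> bool" where
  "to_regular p q \<longleftrightarrow>
     hdist (hpoint (v3 p q 0)) (hpoint (v3 q p 0)) = hdist (hpoint (v3 p q 0)) (hpoint (v3 p 0 q))"

text \<open>Outward unit normal of the hexagonal face orthogonal to the direction \<sigma> (a sign vector).\<close>
definition hex_normal :: "real \<Rightarrow> real \<Rightarrow> real^3 \<Rightarrow> mpt" where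
  "hex_normal p q \<sigma> = outer_normal
      (hpoint (v3 (\<sigma>$1 * p) (\<sigma>$2 * q) 0))
      (hpoint (v3 (\<sigma>$1 * q) (\<sigma>$2 * p) 0))
      (hpoint (v3 0 (\<sigma>$2 * p) (\<sigma>$3 * q))) horigin"

definition sq_normal :: "real \<Rightarrow> real \<Rightarrow> mpt" where
  "sq_normal p q = outer_normal (hpoint (v3 p q 0)) (hpoint (v3 p 0 q)) (hpoint (v3 p (-q) 0)) horigin"

definition to_alpha :: "real \<Rightarrow> real \<Rightarrow> real" where
  "to_alpha p q = dihedral (hex_normal p q (v3 1 1 1)) (hex_normal p q (v3 1 1 (-1)))"

definition to_beta :: "real \<Rightarrow> real \<Rightarrow> real" where
  "to_beta p q = dihedral (sq_normal p q) (hex_normal p q (v3 1 1 1))"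

text \<open>Rotation by pi/2 about the first axis; it maps the square face orthogonal to the first axis
  to itself, cyclically permuting its edges.\<close>
definition rot90 :: "mpt \<Rightarrow> mpt" where
  "rot90 x = (fst x, v3 (snd x $ 1) (- snd x $ 3) (snd x $ 2))"

text \<open>A rotationally symmetric pyramid over the square face orthogonal to the positive first axis
  is given by the outward unit normal lam of the lateral face through the base edge from
  (p,q,0) to (p,0,q); the other lateral faces are its images under rot90.  The pyramid is the
  region beyond the base plane and inside the four lateral half-spaces (its apex may be a point,
  ideal, or hyperideal).\<close>
definition pyr_lateral_ok :: "real \<Rightarrow> real \<Rightarrow> mpt \<Rightarrow> bool" where
  "pyr_lateral_ok p q lam \<longleftrightarrow> mink lam lam = 1
      \<and> mink lam (hpoint (v3 p q 0)) = 0 \<and> mink lam (hpoint (v3 p 0 q)) = 0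
      \<and> mink lam (hpoint (v3 p (-q) 0)) < 0"

definition pyramid :: "real \<Rightarrow> real \<Rightarrow> mpt \<Rightarrow> mpt set" where
  "pyramid p q lam = {x \<in> hyp. mink x (sq_normal p q) \<ge> 0
      \<and> (\<forall>k::nat. k < 4 \<longrightarrow> mink x ((rot90 ^^ k) lam) \<le> 0)}"

text \<open>gamma: dihedral angle between the base and a side of the pyramid (the outward normal of the
  pyramid at its base is minus the outward normal of the square face of the truncated octahedron).\<close>
definition pyr_gamma :: "real \<Rightarrow> real \<Rightarrow> mpt \<Rightarrow> real" where
  "pyr_gamma p q lam = dihedral (- sq_normal p q) lam"

definition pyr_side_angle :: "mpt \<Rightarrow> real" where
  "pyr_side_angle lam = dihedral lam (rot90 lam)"

definition KP_data :: "nat \<Rightarrow> real \<Rightarrow> real \<Rightarrow> mpt \<Rightarrow> bool" where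
  "KP_data n p q lam \<longleftrightarrow> 0 < q \<and> q < p \<and> to_regular p q
      \<and> pyr_lateral_ok p q lam
      \<and> pyr_side_angle lam = 2 * pi / real n
      \<and> to_alpha p q + 2 * to_beta p q + 2 * pyr_gamma p q lam = 2 * pi"

definition KP_set :: "real \<Rightarrow> real \<Rightarrow> mpt \<Rightarrow> mpt set" where
  "KP_set p q lam = trunc_oct p q \<union> (\<Union>f\<in>oct_group. map_prod id f ` pyramid p q lam)"

definition refl_rot :: "real \<Rightarrow> real \<Rightarrow> real^3 \<Rightarrow> mpt \<Rightarrow> mpt" where
  "refl_rot p q \<sigma> x = hrot ((1 / sqrt 3) *\<^sub>R \<sigma>) (pi / 3) (hrefl (hex_normal p q \<sigma>) x)"

text \<open>Regular octahedron concentric with the truncated octahedron, with faces parallel to its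
  hexagonal faces (i.e. orthogonal to the directions (+-1,+-1,+-1)); its vertices are at distance
  t from the centre on the coordinate axes.\<close>
definition oct_verts :: "real \<Rightarrow> mpt set" where
  "oct_verts t = {(cosh t, (s * sinh t) *\<^sub>R axis i 1) | i s. s = 1 \<or> s = -1}"

definition oct_face :: "real \<Rightarrow> real^3 \<Rightarrow> mpt set" where
  "oct_face t \<sigma> = {(cosh t, (\<sigma> $ i * sinh t) *\<^sub>R axis i 1) | i. True}"

text \<open>Regular antiprism with bottom triangle a1 a2 a3 and top triangle b1 b2 b3: the two
  triangles and the six lateral triangles a1 a2 b1, b1 b2 a2, a2 a3 b2, b2 b3 a3, a3 a1 b3,
  b3 b1 a1 are equilateral with the common (positive) edge length.\<close>
definition reg_antiprism :: "mpt \<Rightarrow> mpt \<Rightarrow> mpt \<Rightarrow> mpt \<Rightarrow> mpt \<Rightarrow> mpt \<Rightarrow> bool" where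
  "reg_antiprism a1 a2 a3 b1 b2 b3 \<longleftrightarrow> 0 < hdist a1 a2 \<and>
     (\<forall>e\<in>{hdist a2 a3, hdist a3 a1, hdist b1 b2, hdist b2 b3, hdist b3 b1,
           hdist a1 b1, hdist a2 b1, hdist a2 b2, hdist a3 b2, hdist a3 b3, hdist a1 b3}.
        e = hdist a1 a2)"

definition sym_antiprism_over :: "real \<Rightarrow> real \<Rightarrow> real \<Rightarrow> real^3 \<Rightarrow> bool" where
  "sym_antiprism_over p q t \<sigma> \<longleftrightarrow> (\<exists>a1 a2 a3 b1 b2 b3.
      {a1, a2, a3} = oct_face t \<sigma> \<and> {b1, b2, b3} = refl_rot p q \<sigma> ` {a1, a2, a3}
      \<and> reg_antiprism a1 a2 a3 b1 b2 b3)"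

end

theory Submission
  imports Defs
begin

lemma sq1: "s * s = (1::real) \<Longrightarrow> s = 1 \<or> s = -1"
proof -
  assume "s * s = 1" then have "(s - 1) * (s + 1) = 0" by algebra
  then show ?thesis by auto
qed

lemma v3_nth [simp]: "v3 a b c $ 1 = a" "v3 a b c $ 2 = b" "v3 a b c $ 3 = c"
  by (simp_all add: v3_def)

lemma v3_eta: "x = v3 (x$1) (x$2) (x$3)"
  by (simp add: vec_eq_iff forall_3)

lemma v3_eq_iff [simp]: "v3 a b c = v3 d e f \<longleftrightarrow> a = d \<and> b = e \<and> c = f"
  by (simp add: vec_eq_iff forall_3)

lemma inner_v3 [simp]: "v3 a b c \<bullet> v3 d e f = a*d + b*e + c*f"
  by (simp add: inner_vec_def sum_3)

lemma v3_add [simp]: "v3 a b c + v3 d e f = v3 (a+d) (b+e) (c+f)"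
  by (simp add: vec_eq_iff forall_3)
lemma v3_diff [simp]: "v3 a b c - v3 d e f = v3 (a-d) (b-e) (c-f)"
  by (simp add: vec_eq_iff forall_3)
lemma v3_uminus [simp]: "- v3 a b c = v3 (-a) (-b) (-c)"
  by (simp add: vec_eq_iff forall_3)
lemma v3_scale [simp]: "k *\<^sub>R v3 a b c = v3 (k*a) (k*b) (k*c)"
  by (simp add: vec_eq_iff forall_3)
lemma v3_zero: "(0::real^3) = v3 0 0 0"
  by (simp add: vec_eq_iff forall_3)
lemma cross3_v3 [simp]: "cross3 (v3 a b c) (v3 d e f) = v3 (b*f - c*e) (c*d - a*f) (a*e - b*d)"
  by (simp add: cross3_def v3_def)
lemma axis_v3: "axis 1 (1::real) = v3 1 0 0" "axis 2 (1::real) = v3 0 1 0" "axis 3 (1::real) = v3 0 0 1"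
  by (simp_all add: vec_eq_iff forall_3 axis_def)

lemma mink_v3 [simp]: "mink (x0, v3 x1 x2 x3) (y0, v3 y1 y2 y3) = - x0*y0 + x1*y1 + x2*y2 + x3*y3"
  by (simp add: mink_def)

lemma hpoint_v3: "hpoint (v3 a b c) = (sqrt (1 + a*a + b*b + c*c), v3 a b c)"
  by (simp add: hpoint_def add.assoc)

lemma hrot60: "hrot ((1 / sqrt 3) *\<^sub>R v3 s1 s2 s3) (pi/3) (x0, v3 x1 x2 x3) =
   (x0, v3 (x1/2 + (s2*x3 - s3*x2)/2 + (s1*x1+s2*x2+s3*x3) * s1/6)
           (x2/2 + (s3*x1 - s1*x3)/2 + (s1*x1+s2*x2+s3*x3) * s2/6)
           (x3/2 + (s1*x2 - s2*x1)/2 + (s1*x1+s2*x2+s3*x3) * s3/6))"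
proof -
  have w: "sqrt 3 * sqrt 3 = (3::real)" by simp
  show ?thesis unfolding hrot_def sin_60 cos_60
    using w by (simp add: field_simps)
qed

lemma hrefl_v3: "hrefl (n0, v3 n1 n2 n3) (x0, v3 x1 x2 x3) =
   (let k = 2 * mink (x0, v3 x1 x2 x3) (n0, v3 n1 n2 n3) in (x0 - k*n0, v3 (x1 - k*n1) (x2 - k*n2) (x3 - k*n3)))"
  by (simp add: hrefl_def Let_def)

lemma hex_normal_eq:
  fixes q :: real
  assumes q: "q > 0" and p: "p = 2 * q"
    and s1: "s1 * s1 = 1" and s2: "s2 * s2 = 1" and s3: "s3 * s3 = 1"
  shows "hex_normal p q (v3 s1 s2 s3) =
     (sqrt 3 * q / sqrt (1+2 * q^2), v3 (s1 * (sqrt (1+5 * q^2) / (sqrt 3 * sqrt (1+2 * q^2))))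
                                      (s2 * (sqrt (1+5 * q^2) / (sqrt 3 * sqrt (1+2 * q^2))))
                                      (s3 * (sqrt (1+5 * q^2) / (sqrt 3 * sqrt (1+2 * q^2)))))"
proof -
  define r where "r = sqrt (1+5 * q^2)"
  define sg where "sg = sqrt (1+2 * q^2)"
  define w where "w = sqrt (3::real)"
  have r2: "r * r = 1+5 * q^2" and s2': "sg * sg = 1+2 * q^2" and w2: "w * w = 3"
    by (simp_all add: r_def sg_def w_def)
  have rp: "r > 0" "sg > 0" "w > 0" by (simp_all add: r_def sg_def w_def add_pos_nonneg)
  have e1: "1 + s1 * p * (s1 * p) + s2 * q * (s2 * q) + 0 * 0 = 1+5 * q^2"
    using s1 s2 p by algebra
  have e2: "1 + s1 * q * (s1 * q) + s2 * p * (s2 * p) + 0 * 0 = 1+5 * q^2"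
    using s1 s2 p by algebra
  have e3: "1 + 0 * 0 + s2 * p * (s2 * p) + s3 * q * (s3 * q) = 1+5 * q^2"
    using s3 s2 p by algebra
  have hp1: "hpoint (v3 (s1 * p) (s2 * q) 0) = (r, v3 (s1 * p) (s2 * q) 0)"
    unfolding hpoint_v3 e1 r_def ..
  have hp2: "hpoint (v3 (s1 * q) (s2 * p) 0) = (r, v3 (s1 * q) (s2 * p) 0)"
    unfolding hpoint_v3 e2 r_def ..
  have hp3: "hpoint (v3 0 (s2 * p) (s3 * q)) = (r, v3 0 (s2 * p) (s3 * q))"
    unfolding hpoint_v3 e3 r_def ..
  define b where "b = r / (w * sg)"
  define a where "a = w * q / sg"
  have goal: "hex_normal p q (v3 s1 s2 s3) = (a, v3 (s1 * b) (s2 * b) (s3 * b))"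
    unfolding hex_normal_def outer_normal_def v3_nth
  proof (rule the_equality)
    show "mink (a, v3 (s1 * b) (s2 * b) (s3 * b)) (a, v3 (s1 * b) (s2 * b) (s3 * b)) = 1 \<and>
      mink (a, v3 (s1 * b) (s2 * b) (s3 * b)) (hpoint (v3 (s1 * p) (s2 * q) 0)) = 0 \<and>
      mink (a, v3 (s1 * b) (s2 * b) (s3 * b)) (hpoint (v3 (s1 * q) (s2 * p) 0)) = 0 \<and>
      mink (a, v3 (s1 * b) (s2 * b) (s3 * b)) (hpoint (v3 0 (s2 * p) (s3 * q))) = 0 \<and>
      mink (a, v3 (s1 * b) (s2 * b) (s3 * b)) horigin < 0"
    proof (intro conjI)
      have "-a * a + 3 * b * b = 1"
      proof -
        have "-a * a + 3 * b * b = (r * r - w * w * q * q) / (sg * sg)"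
          unfolding a_def b_def using rp w2 by (simp add: field_simps)
        also have "... = 1" using r2 s2' w2 rp by (simp add: power2_eq_square) (metis add_pos_nonneg mult_nonneg_nonneg zero_le_numeral zero_le_square zero_less_one less_irrefl)
        finally show ?thesis .
      qed
      then show "mink (a, v3 (s1 * b) (s2 * b) (s3 * b)) (a, v3 (s1 * b) (s2 * b) (s3 * b)) = 1"
        using s1 s2 s3 by simp algebra
      have k: "a * r = 3 * q * b" unfolding a_def b_def using rp w2
        by (simp add: field_simps)
      show "mink (a, v3 (s1 * b) (s2 * b) (s3 * b)) (hpoint (v3 (s1 * p) (s2 * q) 0)) = 0"
        unfolding hp1 using k s1 s2 p by simp algebra
      show "mink (a, v3 (s1 * b) (s2 * b) (s3 * b)) (hpoint (v3 (s1 * q) (s2 * p) 0)) = 0"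
        unfolding hp2 using k s1 s2 p by simp algebra
      show "mink (a, v3 (s1 * b) (s2 * b) (s3 * b)) (hpoint (v3 0 (s2 * p) (s3 * q))) = 0"
        unfolding hp3 using k s3 s2 p by simp algebra
      show "mink (a, v3 (s1 * b) (s2 * b) (s3 * b)) horigin < 0"
        unfolding horigin_def v3_zero using rp q by (simp add: a_def)
    qed
  next
    fix \<nu> assume H: "mink \<nu> \<nu> = 1 \<and>
      mink \<nu> (hpoint (v3 (s1 * p) (s2 * q) 0)) = 0 \<and>
      mink \<nu> (hpoint (v3 (s1 * q) (s2 * p) 0)) = 0 \<and>
      mink \<nu> (hpoint (v3 0 (s2 * p) (s3 * q))) = 0 \<and> mink \<nu> horigin < 0"
    obtain x0 y1 y2 y3 where nu: "\<nu> = (x0, v3 y1 y2 y3)"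
      by (metis v3_eta surj_pair)
    have N: "-x0 * x0 + y1 * y1+y2 * y2+y3 * y3 = 1" using H nu by simp
    have E1: "-x0 * r + s1 * p * y1 + s2 * q * y2 = 0" using H nu unfolding hp1 by (simp add: algebra_simps)
    have E2: "-x0 * r + s1 * q * y1 + s2 * p * y2 = 0" using H nu unfolding hp2 by (simp add: algebra_simps)
    have E3: "-x0 * r + s2 * p * y2 + s3 * q * y3 = 0" using H nu unfolding hp3 by (simp add: algebra_simps)
    have D: "x0 > 0" using H nu unfolding horigin_def v3_zero by simp
    define z where "z = s1 * y1"
    have "(p-q) * (s1 * y1 - s2 * y2) = 0" using E1 E2 by algebra
    then have z2: "s2 * y2 = z" using p q z_def by simp
    have "q * (z - s3 * y3) = 0" using E1 E3 z2 z_def by algebra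
    then have z3: "s3 * y3 = z" using q by simp
    have y1: "y1 = s1 * z" using s1 z_def by algebra
    have y2: "y2 = s2 * z" using s2 z2 by algebra
    have y3: "y3 = s3 * z" using s3 z3 by algebra
    have N': "-x0 * x0 + 3 * z * z = 1" using N y1 y2 y3 s1 s2 s3 by algebra
    have E': "x0 * r = 3 * q * z" using E1 y1 y2 s1 s2 p by algebra
    have "x0 * x0 * (sg * sg) = (w * q) * (w * q)"
    proof -
      have "3 * q * q * (-x0 * x0 + 3 * z * z) = 3 * q * q" using N' by simp
      moreover have "9 * q * q * z * z = x0 * x0 * r * r" using E' by algebra
      ultimately show ?thesis using r2 s2' w2 by algebra
    qed
    then have "(x0 * sg)^2 = (w * q)^2" by (simp add: power2_eq_square algebra_simps)
    then have "x0 * sg = w * q" using D rp q by (simp add: power2_eq_iff_nonneg)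
    then have x0: "x0 = a" unfolding a_def using rp by (simp add: field_simps)
    have "z = b" using E' x0 rp q w2 unfolding a_def b_def by (simp add: field_simps) algebra
    then show "\<nu> = (a, v3 (s1 * b) (s2 * b) (s3 * b))" using nu x0 y1 y2 y3 by (simp add: mult.commute)
  qed
  show ?thesis unfolding goal a_def b_def r_def sg_def w_def by (simp add: mult.commute)
qed

lemma refl_rot_expl:
  assumes hn: "hex_normal p q (v3 s1 s2 s3) = (a, v3 (s1 * b) (s2 * b) (s3 * b))"
  shows "refl_rot p q (v3 s1 s2 s3) (x0, v3 x1 x2 x3) =
    (let k = 2 * (- x0 * a + x1 * (s1 * b) + x2 * (s2 * b) + x3 * (s3 * b));
         y1 = x1 - k * (s1 * b); y2 = x2 - k * (s2 * b); y3 = x3 - k * (s3 * b)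
     in (x0 - k * a, v3 (y1/2 + (s2 * y3 - s3 * y2)/2 + (s1 * y1 + s2 * y2 + s3 * y3) * s1/6)
           (y2/2 + (s3 * y1 - s1 * y3)/2 + (s1 * y1 + s2 * y2 + s3 * y3) * s2/6)
           (y3/2 + (s1 * y2 - s2 * y1)/2 + (s1 * y1 + s2 * y2 + s3 * y3) * s3/6)))"
  unfolding refl_rot_def hn hrefl_v3 Let_def mink_v3 hrot60 by simp

lemma hrefl_mink:
  assumes "mink n n = 1"
  shows "mink (hrefl n x) (hrefl n y) = mink x y"
proof -
  have bil: "\<And>u v z c d. mink (u - c *\<^sub>R z) (v - d *\<^sub>R z) = mink u v - d * mink u z - c * mink z v + c * d * mink z z"
    by (simp add: mink_def inner_diff_left inner_diff_right algebra_simps)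
  have sym: "\<And>x y. mink x y = mink y x" by (simp add: mink_def inner_commute)
  show ?thesis unfolding hrefl_def bil assms using sym[of n x] sym[of n y] by (simp add: algebra_simps)
qed

lemma hrot60_mink:
  assumes s1: "s1 * s1 = 1" and s2: "s2 * s2 = 1" and s3: "s3 * s3 = 1"
  shows "mink (hrot ((1 / sqrt 3) *\<^sub>R v3 s1 s2 s3) (pi/3) x) (hrot ((1 / sqrt 3) *\<^sub>R v3 s1 s2 s3) (pi/3) y) = mink x y"
proof -
  obtain x0 x1 x2 x3 where x: "x = (x0, v3 x1 x2 x3)" by (metis v3_eta surj_pair)
  obtain y0 y1 y2 y3 where y: "y = (y0, v3 y1 y2 y3)" by (metis v3_eta surj_pair)
  show ?thesis unfolding x y hrot60 mink_v3 using sq1[OF s1] sq1[OF s2] sq1[OF s3]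
    by (elim disjE) (simp_all add: field_simps)
qed

lemma antiprism_case:
  assumes hn: "hex_normal p q (v3 s1 s2 s3) = (a, v3 (s1 * b) (s2 * b) (s3 * b))"
    and s1: "s1 * s1 = 1" and s2: "s2 * s2 = 1" and s3: "s3 * s3 = 1"
    and w2: "w * w = 3" and rel: "w * a * C = (w * b + 1) * S"
    and CS: "C * C = 1 + S * S" and Sp: "S > 0" and nrm: "- a * a + 3 * b * b = 1"
    and ct: "cosh t = C" and st: "sinh t = S"
  shows "sym_antiprism_over p q t (v3 s1 s2 s3)"
proof -
  define A1 where "A1 = (C, v3 (s1 * S) 0 0)"
  define A2 where "A2 = (C, v3 0 (s2 * S) 0)"
  define A3 where "A3 = (C, v3 0 0 (s3 * S))"
  define B1 where "B1 = refl_rot p q (v3 s1 s2 s3) A1"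
  define B2 where "B2 = refl_rot p q (v3 s1 s2 s3) A2"
  define B3 where "B3 = refl_rot p q (v3 s1 s2 s3) A3"
  have face: "oct_face t (v3 s1 s2 s3) = {A1, A2, A3}"
      proof -
    have U: "(UNIV::3 set) = {1,2,3}" using exhaust_3 by auto
    have "{(C, ((v3 s1 s2 s3) $ i * S) *\<^sub>R axis i 1) | i. True} = (\<lambda>i. (C, ((v3 s1 s2 s3) $ i * S) *\<^sub>R axis i 1)) ` UNIV"
      by auto
    also have "... = {A1, A2, A3}" unfolding U A1_def A2_def A3_def by (simp add: axis_v3)
    finally show ?thesis unfolding oct_face_def ct st .
  qed
  define P where "P = s1 * s2 * s3"
  have k: "w * (- C * a + S * b) = - S" using rel w2 by algebra
  note ex = refl_rot_expl[OF hn]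
  have m11: "mink A1 B1 = - (C * C)" unfolding A1_def B1_def ex Let_def mink_v3
    using s1 s2 s3 w2 k CS by algebra
  have msym: "\<And>x y. mink x y = mink y x" by (simp add: mink_def inner_commute)
  have m22: "mink A2 B2 = - (C * C)" unfolding A2_def B2_def ex Let_def mink_v3
    using s1 s2 s3 w2 k CS by algebra
  have m33: "mink A3 B3 = - (C * C)" unfolding A3_def B3_def ex Let_def mink_v3
    using s1 s2 s3 w2 k CS by algebra
  have a12: "mink A1 A2 = - (C * C)" "mink A2 A3 = - (C * C)" "mink A3 A1 = - (C * C)"
    unfolding A1_def A2_def A3_def by simp_all
  have iso: "\<And>x y. mink (refl_rot p q (v3 s1 s2 s3) x) (refl_rot p q (v3 s1 s2 s3) y) = mink x y"
  proof -
    fix x y :: mpt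
    obtain x0 x1 x2 x3 where x: "x = (x0, v3 x1 x2 x3)" by (metis v3_eta surj_pair)
    obtain y0 y1 y2 y3 where y: "y = (y0, v3 y1 y2 y3)" by (metis v3_eta surj_pair)
    have n: "mink (a, v3 (s1 * b) (s2 * b) (s3 * b)) (a, v3 (s1 * b) (s2 * b) (s3 * b)) = 1"
      using nrm s1 s2 s3 by simp algebra
    show "mink (refl_rot p q (v3 s1 s2 s3) x) (refl_rot p q (v3 s1 s2 s3) y) = mink x y"
      unfolding refl_rot_def hn x y by (simp only: hrot60_mink[OF s1 s2 s3] hrefl_mink[OF n])
  qed
  have b12: "mink B1 B2 = - (C * C)" unfolding B1_def B2_def iso using a12 by simp
  have b23: "mink B2 B3 = - (C * C)" unfolding B2_def B3_def iso using a12 by simp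
  have b31: "mink B3 B1 = - (C * C)" unfolding B3_def B1_def iso using a12 by simp
  have pos: "0 < arcosh (C * C)" using CS Sp by simp
  have img: "{B1, B2, B3} = refl_rot p q (v3 s1 s2 s3) ` {A1, A2, A3}"
    unfolding B1_def B2_def B3_def by simp
  have "P * P = 1" unfolding P_def using s1 s2 s3 by algebra
  then have "P = 1 \<or> P = -1"
  proof -
    have "(P - 1) * (P + 1) = 0" using \<open>P * P = 1\<close> by algebra
    then show ?thesis by auto
  qed
  then show ?thesis
  proof
    assume P: "P = 1"
    have "mink A2 B1 = - (C * C)" using s1 s2 s3 w2 k CS P unfolding P_def B1_def A1_def A2_def A3_def ex Let_def mink_v3 by algebra
    moreover have "mink A3 B2 = - (C * C)" using s1 s2 s3 w2 k CS P unfolding P_def B2_def A1_def A2_def A3_def ex Let_def mink_v3 by algebra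
    moreover have "mink A1 B3 = - (C * C)" using s1 s2 s3 w2 k CS P unfolding P_def B3_def A1_def A2_def A3_def ex Let_def mink_v3 by algebra
    ultimately have "reg_antiprism A1 A2 A3 B1 B2 B3"
      unfolding reg_antiprism_def hdist_def using m11 m22 m33 a12 b12 b23 b31 pos by simp
    then show ?thesis unfolding sym_antiprism_over_def using face img by blast
  next
    assume P: "P = -1"
    have "mink A3 B1 = - (C * C)" using s1 s2 s3 w2 k CS P unfolding P_def B1_def A1_def A2_def A3_def ex Let_def mink_v3 by algebra
    moreover have "mink A2 B3 = - (C * C)" using s1 s2 s3 w2 k CS P unfolding P_def B3_def A1_def A2_def A3_def ex Let_def mink_v3 by algebra
    moreover have "mink A1 B2 = - (C * C)" using s1 s2 s3 w2 k CS P unfolding P_def B2_def A1_def A2_def A3_def ex Let_def mink_v3 by algebra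
    ultimately have "reg_antiprism A1 A3 A2 B1 B3 B2"
      unfolding reg_antiprism_def hdist_def using m11 m22 m33 a12 b12 b23 b31 pos msym by simp
    moreover have "{A1, A3, A2} = oct_face t (v3 s1 s2 s3)" using face by auto
    moreover have "{B1, B3, B2} = refl_rot p q (v3 s1 s2 s3) ` {A1, A3, A2}" using img by auto
    ultimately show ?thesis unfolding sym_antiprism_over_def by blast
  qed
qed

lemma hconv_sub:
  assumes "\<And>v. v \<in> V \<Longrightarrow> v \<in> cone hull (convex hull W)"
  shows "hconv V \<subseteq> hconv W"
proof
  fix x assume x: "x \<in> hconv V"
  then obtain c y where xy: "x \<in> hyp" "x = c *\<^sub>R y" "0 \<le> c" "y \<in> convex hull V"
    unfolding hconv_def by auto
  have cv: "convex (cone hull (convex hull W))"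
    by (simp add: convex_cone_hull)
  have "convex hull V \<subseteq> cone hull (convex hull W)"
    by (rule hull_minimal) (use assms cv in auto)
  with xy obtain c' z where cz: "y = c' *\<^sub>R z" "0 \<le> c'" "z \<in> convex hull W"
    unfolding cone_hull_expl by auto
  then have "x = (c * c') *\<^sub>R z" "0 \<le> c * c'" using xy by auto
  then show "x \<in> hconv W" unfolding hconv_def using xy cz by blast
qed

lemma half1: "(1/2::real) *\<^sub>R (u + y) + (1/2) *\<^sub>R (u - y) = (u::'a::real_vector)"
proof -
  have "(1/2::real) *\<^sub>R (u + y) + (1/2) *\<^sub>R (u - y) = ((1/2) + (1/2::real)) *\<^sub>R u"
    by (simp only: scaleR_right_distrib scaleR_right_diff_distrib scaleR_left_distrib) (simp add: algebra_simps)
  then show ?thesis by simp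
qed
lemma comb1: "((1+c)/2::real) *\<^sub>R u + ((1-c)/2) *\<^sub>R (-u) = c *\<^sub>R (u::'a::real_vector)"
proof -
  have "((1+c)/2::real) *\<^sub>R u + ((1-c)/2) *\<^sub>R (-u) = ((1+c)/2 - (1-c)/2) *\<^sub>R u"
    by (simp add: scaleR_left_diff_distrib)
  then show ?thesis by (simp add: field_simps)
qed

lemma seg_helper:
  fixes S :: "mpt set"
  assumes "(R, u + y) \<in> S" "(R, u - y) \<in> S" "(R, -u + y) \<in> S" "(R, -u - y) \<in> S"
    and cs: "convex S" and c: "\<bar>c\<bar> \<le> 1"
  shows "(R, c *\<^sub>R u) \<in> S"
proof -
  have "(1/2) *\<^sub>R (R, u + y) + (1/2) *\<^sub>R (R, u - y) \<in> S"
    by (rule convexD[OF cs assms(1,2)]) auto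
  then have M1: "(R, u) \<in> S" by (simp only: scaleR_Pair add_Pair half1) simp
  have "(1/2) *\<^sub>R (R, -u + y) + (1/2) *\<^sub>R (R, -u - y) \<in> S"
    by (rule convexD[OF cs assms(3,4)]) auto
  then have M2: "(R, -u) \<in> S" using half1[of "-u" y] by (simp only: scaleR_Pair add_Pair) simp
  have "((1+c)/2) *\<^sub>R (R, u) + ((1-c)/2) *\<^sub>R (R, -u) \<in> S"
    by (rule convexD[OF cs M1 M2]) (use c in \<open>auto simp: field_simps\<close>)
  moreover have "((1+c)/2) *\<^sub>R (R, u) + ((1-c)/2) *\<^sub>R (R, -u) = (R, c *\<^sub>R u)"
    by (simp only: scaleR_Pair add_Pair comb1) (simp add: field_simps)
  ultimately show ?thesis by simp
qed

lemma in_tv: "i \<noteq> j \<Longrightarrow> j \<noteq> k \<Longrightarrow> i \<noteq> k \<Longrightarrow> \<bar>v$i\<bar> = p \<Longrightarrow> \<bar>v$j\<bar> = q \<Longrightarrow> v$k = 0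
   \<Longrightarrow> hpoint v \<in> to_verts p q"
  unfolding to_verts_def by blast

lemma axis_in_hull:
  fixes p q :: real
  assumes p: "p > 0" "q \<ge> 0" and c: "\<bar>c\<bar> \<le> 1"
  shows "(sqrt (1 + p*p + q*q), (c * p) *\<^sub>R axis i 1) \<in> convex hull (to_verts p q)"
proof -
  have cs: "convex (convex hull (to_verts p q))" by simp
  have H: "hpoint v \<in> convex hull (to_verts p q)" if "hpoint v \<in> to_verts p q" for v
    using that by (rule hull_inc)
  have n12: "(1::3) \<noteq> 2" "(2::3) \<noteq> 3" "(1::3) \<noteq> 3" by simp_all
  have m: "(sqrt (1 + p*p + q*q), v) \<in> convex hull (to_verts p q)"
    if "hpoint v \<in> to_verts p q" "v \<bullet> v = p*p + q*q" for v
    using H[OF that(1)] that(2) unfolding hpoint_def by (simp add: add.assoc)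
  have T: "hpoint (v3 a b d) \<in> to_verts p q" if "i \<noteq> j" "j \<noteq> k" "i \<noteq> k"
    "\<bar>v3 a b d $ i\<bar> = p" "\<bar>v3 a b d $ j\<bar> = q" "v3 a b d $ k = 0" for a b d i j k
    using in_tv[OF that] .
  have pp: "\<bar>p\<bar> = p" "\<bar>-p\<bar> = p" "\<bar>q\<bar> = q" "\<bar>-q\<bar> = q" using p by auto
  consider "i = 1" | "i = 2" | "i = 3" using exhaust_3 by blast
  then show ?thesis
  proof cases
    case 1
    have "(sqrt (1 + p*p + q*q), c *\<^sub>R v3 p 0 0) \<in> convex hull (to_verts p q)"
    proof (rule seg_helper[OF _ _ _ _ cs c])
      show "(sqrt (1 + p*p + q*q), v3 p 0 0 + v3 0 q 0) \<in> convex hull (to_verts p q)"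
        by (rule m) (simp_all, rule T[of 1 2 3], simp_all add: pp)
      show "(sqrt (1 + p*p + q*q), v3 p 0 0 - v3 0 q 0) \<in> convex hull (to_verts p q)"
        by (rule m) (simp_all, rule T[of 1 2 3], simp_all add: pp)
      show "(sqrt (1 + p*p + q*q), - v3 p 0 0 + v3 0 q 0) \<in> convex hull (to_verts p q)"
        by (rule m) (simp_all, rule T[of 1 2 3], simp_all add: pp)
      show "(sqrt (1 + p*p + q*q), - v3 p 0 0 - v3 0 q 0) \<in> convex hull (to_verts p q)"
        by (rule m) (simp_all, rule T[of 1 2 3], simp_all add: pp)
    qed
    then show ?thesis using 1 by (simp add: axis_v3 mult.commute)
  next
    case 2
    have "(sqrt (1 + p*p + q*q), c *\<^sub>R v3 0 p 0) \<in> convex hull (to_verts p q)"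
    proof (rule seg_helper[OF _ _ _ _ cs c])
      show "(sqrt (1 + p*p + q*q), v3 0 p 0 + v3 0 0 q) \<in> convex hull (to_verts p q)"
        by (rule m) (simp_all, rule T[of 2 3 1], simp_all add: pp)
      show "(sqrt (1 + p*p + q*q), v3 0 p 0 - v3 0 0 q) \<in> convex hull (to_verts p q)"
        by (rule m) (simp_all, rule T[of 2 3 1], simp_all add: pp)
      show "(sqrt (1 + p*p + q*q), - v3 0 p 0 + v3 0 0 q) \<in> convex hull (to_verts p q)"
        by (rule m) (simp_all, rule T[of 2 3 1], simp_all add: pp)
      show "(sqrt (1 + p*p + q*q), - v3 0 p 0 - v3 0 0 q) \<in> convex hull (to_verts p q)"
        by (rule m) (simp_all, rule T[of 2 3 1], simp_all add: pp)
    qed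
    then show ?thesis using 2 by (simp add: axis_v3 mult.commute)
  next
    case 3
    have "(sqrt (1 + p*p + q*q), c *\<^sub>R v3 0 0 p) \<in> convex hull (to_verts p q)"
    proof (rule seg_helper[OF _ _ _ _ cs c])
      show "(sqrt (1 + p*p + q*q), v3 0 0 p + v3 q 0 0) \<in> convex hull (to_verts p q)"
        by (rule m) (simp_all, rule T[of 3 1 2], simp_all add: pp)
      show "(sqrt (1 + p*p + q*q), v3 0 0 p - v3 q 0 0) \<in> convex hull (to_verts p q)"
        by (rule m) (simp_all, rule T[of 3 1 2], simp_all add: pp)
      show "(sqrt (1 + p*p + q*q), - v3 0 0 p + v3 q 0 0) \<in> convex hull (to_verts p q)"
        by (rule m) (simp_all, rule T[of 3 1 2], simp_all add: pp)
      show "(sqrt (1 + p*p + q*q), - v3 0 0 p - v3 q 0 0) \<in> convex hull (to_verts p q)"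
        by (rule m) (simp_all, rule T[of 3 1 2], simp_all add: pp)
    qed
    then show ?thesis using 3 by (simp add: axis_v3 mult.commute)
  qed
qed

lemma sq_less: "0 \<le> y \<Longrightarrow> x * x < y * y \<Longrightarrow> x < (y::real)"
  using power_less_imp_less_base[of x 2 y] by (simp add: power2_eq_square)

lemma part2:
  fixes q :: real
  assumes q: "q > 0" and p: "p = 2*q"
  shows "\<exists>t>0. hconv (oct_verts t) \<subseteq> KP_set p q lam \<and> (\<forall>\<sigma>\<in>sign_vecs. sym_antiprism_over p q t \<sigma>)"
proof -
  define r where "r = sqrt (1+5*q^2)"
  define sg where "sg = sqrt (1+2*q^2)"
  define w where "w = sqrt (3::real)"
  have r2: "r * r = 1+5*q^2" and s2': "sg * sg = 1+2*q^2" and w2: "w * w = 3"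
    by (simp_all add: r_def sg_def w_def)
  have rp: "r > 0" "sg > 0" "w > 0" by (simp_all add: r_def sg_def w_def add_pos_nonneg)
  define a where "a = w * q / sg"
  define b where "b = r / (w * sg)"
  have nrm: "- a * a + 3 * b * b = 1"
  proof -
    have "-a * a + 3 * b * b = (r * r - w * w * q * q) / (sg * sg)"
      unfolding a_def b_def using rp w2 by (simp add: field_simps)
    also have "... = 1" using r2 s2' w2 rp by (simp add: power2_eq_square) (metis add_pos_nonneg mult_nonneg_nonneg zero_le_numeral zero_le_square zero_less_one less_irrefl)
    finally show ?thesis .
  qed
  have qq: "q * q > 0" using q by simp
  have rq: "r > q"
  proof -
    have "q * q < r * r" using r2 qq by (simp add: power2_eq_square)
    then show ?thesis by (rule sq_less[OF less_imp_le[OF rp(1)]])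
  qed
  have sq: "sg > q"
  proof -
    have "q * q < sg * sg" using s2' qq by (simp add: power2_eq_square)
    then show ?thesis by (rule sq_less[OF less_imp_le[OF rp(2)]])
  qed
  have rs: "r < 2 * sg"
  proof -
    have "r * r < (2 * sg) * (2 * sg)" using r2 s2' qq by (simp add: power2_eq_square)
    moreover have "0 \<le> 2 * sg" using rp by simp
    ultimately show ?thesis using sq_less by blast
  qed
  define D where "D = 2 + 2 * r * sg - 2 * q^2"
  have "q * q < r * sg" using mult_strict_mono[OF rq sq rp(1)] q by simp
  then have Dp: "D > 0" unfolding D_def by (simp add: power2_eq_square)
  define l where "l = 1 / sqrt D"
  have lp: "l > 0" unfolding l_def using Dp by simp
  have lD: "l * l * D = 1" unfolding l_def using Dp by (simp add: field_simps)
  define S where "S = 3 * q * l"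
  define C where "C = (r + sg) * l"
  have Sp: "S > 0" unfolding S_def using q lp by simp
  have Cp: "C > 0" unfolding C_def using rp lp by simp
  have CS: "C * C = 1 + S * S"
  proof -
    have "C * C - S * S = l * l * D" unfolding C_def S_def D_def using r2 s2'
      by (simp add: algebra_simps power2_eq_square)
    then show ?thesis using lD by simp
  qed
  define t where "t = arsinh S"
  have st: "sinh t = S" unfolding t_def by simp
  have ct: "cosh t = C" unfolding t_def cosh_arsinh_real
    using CS Cp by (intro real_sqrt_unique) (simp_all add: power2_eq_square)
  have tp: "t > 0" unfolding t_def using Sp by simp
  have rel: "w * a * C = (w * b + 1) * S"
    unfolding a_def b_def C_def S_def using rp w2 by (simp add: field_simps)
  have anti: "sym_antiprism_over p q t \<sigma>" if "\<sigma> \<in> sign_vecs" for \<sigma>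
  proof -
    have si: "\<sigma> $ i * \<sigma> $ i = 1" for i
    proof -
      have "\<sigma> $ i = 1 \<or> \<sigma> $ i = -1" using that unfolding sign_vecs_def by blast
      then show ?thesis by auto
    qed
    have s: "\<sigma> $ 1 * \<sigma> $ 1 = 1" "\<sigma> $ 2 * \<sigma> $ 2 = 1" "\<sigma> $ 3 * \<sigma> $ 3 = 1"
      using si by auto
    have hn: "hex_normal p q (v3 (\<sigma>$1) (\<sigma>$2) (\<sigma>$3)) = (a, v3 (\<sigma>$1 * b) (\<sigma>$2 * b) (\<sigma>$3 * b))"
      unfolding hex_normal_eq[OF q p s] a_def b_def r_def sg_def w_def ..
    have "sym_antiprism_over p q t (v3 (\<sigma>$1) (\<sigma>$2) (\<sigma>$3))"
      by (rule antiprism_case[OF hn s w2 rel CS Sp nrm ct st])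
    then show ?thesis by (simp only: v3_eta[symmetric])
  qed
  have R: "sqrt (1 + p*p + q*q) = r" unfolding r_def p by (simp add: power2_eq_square algebra_simps)
  have cont: "hconv (oct_verts t) \<subseteq> trunc_oct p q"
    unfolding trunc_oct_def
  proof (rule hconv_sub)
    fix v assume "v \<in> oct_verts t"
    then obtain i s0 where v: "v = (C, (s0 * S) *\<^sub>R axis i 1)" and s0: "s0 = 1 \<or> s0 = -1"
      unfolding oct_verts_def ct st by auto
    define c where "c = s0 * S * r / (C * p)"
    have "\<bar>c\<bar> = S * r / (C * p)" unfolding c_def using s0 Sp Cp rp q p by (auto simp: abs_mult)
    also have "... \<le> 1"
    proof -
      have "S * r \<le> C * p" unfolding S_def C_def p using rs q lp rp
        by (simp add: algebra_simps)
      then show ?thesis using Cp q p by simp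
    qed
    finally have c1: "\<bar>c\<bar> \<le> 1" .
    have pq: "p > 0" "q \<ge> 0" using q p by auto
    have h: "(r, (c * p) *\<^sub>R axis i 1) \<in> convex hull (to_verts p q)"
      using axis_in_hull[OF pq c1, of i] R by simp
    have e1: "C / r * r = C" using rp by simp
    have e2: "C / r * (c * p) = s0 * S" unfolding c_def using rp Cp q p by simp
    have "v = (C / r) *\<^sub>R (r, (c * p) *\<^sub>R axis i 1)"
      unfolding v scaleR_Pair scaleR_scaleR e2 using e1 by simp
    then show "v \<in> cone hull (convex hull (to_verts p q))"
      unfolding cone_hull_expl using h rp Cp by (intro CollectI exI[of _ "C / r"] exI[of _ "(r, (c * p) *\<^sub>R axis i 1)"]) simp
  qed
  show ?thesis
    using tp cont anti unfolding KP_set_def by blast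
qed

lemma sq_normal_eq:
  fixes q :: real
  assumes q: "q > 0" and p: "p = 2*q"
  shows "sq_normal p q = (2 * q / sqrt (1 + q^2), v3 (sqrt (1+5*q^2) / sqrt (1 + q^2)) 0 0)"
proof -
  define r where "r = sqrt (1+5*q^2)"
  define u where "u = sqrt (1+q^2)"
  have r2: "r * r = 1+5*q^2" and u2: "u * u = 1+q^2"
    by (simp_all add: r_def u_def)
  have rp: "r > 0" "u > 0" by (simp_all add: r_def u_def add_pos_nonneg)
  have e1: "1 + p * p + q * q + 0 * 0 = 1+5*q^2" using p by (simp add: power2_eq_square)
  have e2: "1 + p * p + 0 * 0 + q * q = 1+5*q^2" using p by (simp add: power2_eq_square)
  have e3: "1 + p * p + (-q) * (-q) + 0 * 0 = 1+5*q^2" using p by (simp add: power2_eq_square)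
  have hp1: "hpoint (v3 p q 0) = (r, v3 p q 0)" unfolding hpoint_v3 e1 r_def ..
  have hp2: "hpoint (v3 p 0 q) = (r, v3 p 0 q)" unfolding hpoint_v3 e2 r_def ..
  have hp3: "hpoint (v3 p (-q) 0) = (r, v3 p (-q) 0)" unfolding hpoint_v3 e3 r_def ..
  define c where "c = 2 * q / u"
  define d where "d = r / u"
  have goal: "sq_normal p q = (c, v3 d 0 0)"
    unfolding sq_normal_def outer_normal_def hp1 hp2 hp3
  proof (rule the_equality)
    have "-c * c + d * d = (r * r - 4 * q * q) / (u * u)"
      unfolding c_def d_def using rp by (simp add: field_simps)
    also have "... = 1" using r2 u2 rp by (simp add: power2_eq_square) (metis add_pos_nonneg zero_le_square zero_less_one less_irrefl)
    finally have n: "-c * c + d * d = 1" .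
    have k: "c * r = p * d" unfolding c_def d_def p using rp by (simp add: field_simps)
    show "mink (c, v3 d 0 0) (c, v3 d 0 0) = 1 \<and>
      mink (c, v3 d 0 0) (r, v3 p q 0) = 0 \<and>
      mink (c, v3 d 0 0) (r, v3 p 0 q) = 0 \<and>
      mink (c, v3 d 0 0) (r, v3 p (- q) 0) = 0 \<and> mink (c, v3 d 0 0) horigin < 0"
      using n k rp q unfolding horigin_def v3_zero by (simp add: c_def algebra_simps)
  next
    fix \<nu> assume H: "mink \<nu> \<nu> = 1 \<and>
      mink \<nu> (r, v3 p q 0) = 0 \<and> mink \<nu> (r, v3 p 0 q) = 0 \<and>
      mink \<nu> (r, v3 p (- q) 0) = 0 \<and> mink \<nu> horigin < 0"
    obtain x0 y1 y2 y3 where nu: "\<nu> = (x0, v3 y1 y2 y3)"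
      by (metis v3_eta surj_pair)
    have N: "-x0 * x0 + y1 * y1 + y2 * y2 + y3 * y3 = 1" using H nu by simp
    have H1: "mink \<nu> (r, v3 p q 0) = 0" "mink \<nu> (r, v3 p 0 q) = 0" "mink \<nu> (r, v3 p (- q) 0) = 0"
      using H by blast+
    have E1: "-x0 * r + p * y1 + q * y2 = 0" using H1(1) unfolding nu mink_v3 by (simp add: mult.commute)
    have E2: "-x0 * r + p * y1 + q * y3 = 0" using H1(2) unfolding nu mink_v3 by (simp add: mult.commute)
    have E3: "-x0 * r + p * y1 - q * y2 = 0" using H1(3) unfolding nu mink_v3 by (simp add: mult.commute)
    have D: "x0 > 0" using H nu unfolding horigin_def v3_zero by simp
    have "2 * q * y2 = 0" using E1 E3 by simp
    then have y2: "y2 = 0" using q by simp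
    then have y3: "y3 = 0" using E1 E2 q by simp
    have E': "x0 * r = p * y1" using E1 y2 by simp
    have N': "-x0 * x0 + y1 * y1 = 1" using N y2 y3 by simp
    have "x0 * x0 * (u * u) = (2 * q) * (2 * q)"
    proof -
      have "p * p * (-x0 * x0 + y1 * y1) = p * p" using N' by simp
      moreover have "p * p * y1 * y1 = x0 * x0 * r * r" using E' by algebra
      ultimately show ?thesis using r2 u2 p by algebra
    qed
    then have "(x0 * u)^2 = (2 * q)^2" by (simp add: power2_eq_square algebra_simps)
    then have "x0 * u = 2 * q" using power2_eq_iff_nonneg[of "x0 * u" "2 * q"] D rp q by simp
    then have x0: "x0 = c" unfolding c_def using rp by (simp add: field_simps)
    have "y1 = d" using E' x0 rp q p unfolding c_def d_def by (simp add: field_simps)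
    then show "\<nu> = (c, v3 d 0 0)" using nu x0 y2 y3 by simp
  qed
  show ?thesis unfolding goal c_def d_def r_def u_def ..
qed

lemma nonneg_sq_eq: "0 \<le> x \<Longrightarrow> 0 \<le> y \<Longrightarrow> x * x = y * y \<Longrightarrow> x = (y::real)"
  using power2_eq_iff_nonneg[of x y] by (simp add: power2_eq_square)

lemma angle_id:
  fixes m g h e w :: real
  assumes m: "2/3 \<le> m" "m < 1"
    and g: "g > 0" "g * g = 2 + 3 * m" and h: "h > 0" "h * h = 2 - m"
    and e: "e > 0" "e * e = 4 - 3 * m" and w: "w > 0" "w * w = 6"
  shows "arccos (m - 1/3) + 2 * arccos ((3 * m - 2) / (w * h)) + 2 * arccos (g * (1 - m) / h) = 2 * pi"
proof -
  define \<alpha> where "\<alpha> = arccos (m - 1/3)"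
  define A where "A = \<alpha> / 2"
  define Bv where "Bv = (3 * m - 2) / (w * h)"
  define \<beta> where "\<beta> = arccos Bv"
  have ca: "cos \<alpha> = m - 1/3" unfolding \<alpha>_def using m by simp
  have a0: "0 \<le> \<alpha>" "\<alpha> \<le> pi" unfolding \<alpha>_def using m by (simp_all add: arccos_lbound arccos_ubound)
  have A0: "0 \<le> A" "A \<le> pi/2" unfolding A_def using a0 by simp_all
  have "cos \<alpha> = 2 * cos A ^ 2 - 1" unfolding A_def using cos_double_cos[of "\<alpha>/2"] by simp
  then have cA2: "cos A * cos A = (g / w) * (g / w)" using ca g w by (simp add: power2_eq_square field_simps)
  have cA: "cos A = g / w"
    by (rule nonneg_sq_eq[OF _ _ cA2]) (use A0 g w cos_ge_zero[of A] in auto)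
  have sA2: "sin A * sin A = (e / w) * (e / w)"
  proof -
    have "sin A * sin A = 1 - cos A * cos A" using sin_cos_squared_add[of A] by (simp add: power2_eq_square)
    then show ?thesis unfolding cA using g w e by (simp add: field_simps)
  qed
  have sA: "sin A = e / w"
    by (rule nonneg_sq_eq[OF _ _ sA2]) (use A0 e w sin_ge_zero[of A] in auto)
  have Bv0: "0 \<le> Bv" unfolding Bv_def using m w h by simp
  have Bv2: "1 - Bv * Bv = (e * g / (w * h)) * (e * g / (w * h))"
  proof -
    have num: "w * w * (h * h) - (3 * m - 2) * (3 * m - 2) = (e * g) * (e * g)"
    proof -
      have "e * g * (e * g) = (e * e) * (g * g)" by (simp add: mult_ac)
      then show ?thesis using w(2) h(2) e(2) g(2) by (simp add: algebra_simps)
    qed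
    have wh: "w * h \<noteq> 0" using w h by simp
    have "1 - Bv * Bv = (w * w * (h * h) - (3 * m - 2) * (3 * m - 2)) / ((w * h) * (w * h))"
      unfolding Bv_def using wh by (simp add: field_simps)
    also have "... = (e * g / (w * h)) * (e * g / (w * h))" unfolding num by simp
    finally show ?thesis .
  qed
  have Bv1: "Bv \<le> 1"
  proof -
    have "Bv * Bv \<le> 1" using Bv2 by (metis diff_ge_0_iff_ge zero_le_square)
    then show ?thesis using Bv0 by (metis mult_le_one not_le mult_strict_mono' less_le_not_le  order.strict_trans1 mult_less_cancel_left1 mult_le_cancel_left1)
  qed
  have cb: "cos \<beta> = Bv" unfolding \<beta>_def using Bv0 Bv1 by simp
  have sb: "sin \<beta> = e * g / (w * h)" unfolding \<beta>_def using Bv0 Bv1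
    by (simp add: sin_arccos) (rule real_sqrt_unique, use Bv2 e g w h in \<open>simp_all add: power2_eq_square\<close>)
  have b0: "0 \<le> \<beta>" "\<beta> \<le> pi/2" unfolding \<beta>_def
    using arccos_lbound[of Bv] arccos_le_pi2[OF Bv0 Bv1] Bv0 Bv1 by auto
  have cAB: "cos (A + \<beta>) = - (g * (1 - m) / h)"
  proof -
    have num: "g * (3 * m - 2) - e * (e * g) = - (g * (1 - m)) * (w * w)"
    proof -
      have "e * (e * g) = (e * e) * g" by (simp add: mult_ac)
      then show ?thesis using w(2) e(2) by (simp add: algebra_simps)
    qed
    have wh: "w \<noteq> 0" "h \<noteq> 0" using w h by simp_all
    have "cos (A + \<beta>) = (g * (3 * m - 2) - e * (e * g)) / (w * w * h)"
      unfolding cos_add cA sA cb sb Bv_def using wh by (simp add: field_simps)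
    also have "... = - (g * (1 - m) / h)" unfolding num using wh by (simp add: field_simps)
    finally show ?thesis .
  qed
  have "arccos (g * (1 - m) / h) = arccos (- cos (A + \<beta>))" unfolding cAB by simp
  also have "... = pi - arccos (cos (A + \<beta>))" by (simp add: arccos_minus)
  also have "... = pi - (A + \<beta>)" using A0 b0 by (simp add: arccos_cos)
  finally have "arccos (g * (1 - m) / h) = pi - (A + \<beta>)" .
  then show ?thesis unfolding \<alpha>_def[symmetric] Bv_def[symmetric] \<beta>_def[symmetric] A_def by simp
qed

lemma reg_p:
  fixes p q :: real
  assumes q: "0 < q" "q < p" and reg: "to_regular p q"
  shows "p = 2 * q"
proof -
  define R where "R = 1 + p * p + q * q"
  have Rp: "R > 0" unfolding R_def by (simp add: add_pos_nonneg)
  have h1: "hpoint (v3 p q 0) = (sqrt R, v3 p q 0)" unfolding hpoint_v3 R_def by simp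
  have h2: "hpoint (v3 q p 0) = (sqrt R, v3 q p 0)" unfolding hpoint_v3 R_def by (simp add: algebra_simps)
  have h3: "hpoint (v3 p 0 q) = (sqrt R, v3 p 0 q)" unfolding hpoint_v3 R_def by simp
  have sR: "sqrt R * sqrt R = R" using Rp by simp
  have "arcosh (R - 2 * p * q) = arcosh (R - p * p)"
    using reg unfolding to_regular_def hdist_def h1 h2 h3 mink_v3 sR using Rp by (simp add: algebra_simps)
  moreover have "R - 2 * p * q \<ge> 1"
  proof -
    have "R - 2 * p * q = 1 + (p - q) * (p - q)" unfolding R_def by (simp add: algebra_simps)
    then show ?thesis by simp
  qed
  moreover have "R - p * p \<ge> 1" unfolding R_def by simp
  ultimately have "R - 2 * p * q = R - p * p" by (metis cosh_arcosh_real)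
  then have "p * (p - 2 * q) = 0" by (simp add: algebra_simps)
  then show ?thesis using q by simp
qed

lemma part1:
  fixes n :: nat
  assumes n: "n \<ge> 4"
  shows "\<exists>p q lam. KP_data n p q lam"
proof -
  define m where "m = cos (pi / real n)"
  have npos: "real n > 0" using n by simp
  have pn1: "0 < pi / real n" using npos by simp
  have pn2: "pi / real n \<le> pi / 4"
    by (rule divide_left_mono) (use n in auto)
  have pn3: "pi / real n \<le> pi" using pn2 pi_gt_zero by linarith
  note pn = pn1 pn2 pn3
  have m1: "m < 1"
  proof -
    have "cos (pi / real n) < cos 0"
      using pn by (subst cos_mono_less_eq) simp_all
    then show ?thesis unfolding m_def by simp
  qed
  have m0: "2/3 \<le> m"
  proof -
    have "cos (pi / 4) \<le> cos (pi / real n)"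
      using pn by (subst cos_mono_le_eq) simp_all
    moreover have "4/3 \<le> sqrt 2" by (rule real_le_rsqrt) (simp add: power2_eq_square)
    ultimately show ?thesis unfolding m_def cos_45 by simp
  qed
  define sm where "sm = sqrt m"
  define k where "k = sqrt (1 - m)"
  define g where "g = sqrt (2 + 3 * m)"
  define h where "h = sqrt (2 - m)"
  define e where "e = sqrt (4 - 3 * m)"
  define w2 where "w2 = sqrt (2::real)"
  define w3 where "w3 = sqrt (3::real)"
  have pos: "sm > 0" "k > 0" "g > 0" "h > 0" "e > 0" "w2 > 0" "w3 > 0"
    unfolding sm_def k_def g_def h_def e_def w2_def w3_def using m0 m1 by simp_all
  have sqs: "sm * sm = m" "k * k = 1 - m" "g * g = 2 + 3 * m" "h * h = 2 - m" "e * e = 4 - 3 * m"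
    "w2 * w2 = 2" "w3 * w3 = 3"
    unfolding sm_def k_def g_def h_def e_def w2_def w3_def using m0 m1 by simp_all
  define q where "q = sm / (w2 * k)"
  define p where "p = 2 * q"
  have qp: "q > 0" unfolding q_def using pos by simp
  have q2: "q ^ 2 = m / (2 * (1 - m))"
  proof -
    have "q ^ 2 = (sm * sm) / ((w2 * w2) * (k * k))" unfolding q_def by (simp add: power2_eq_square)
    then show ?thesis unfolding sqs by simp
  qed
  have k1: "1 - m \<noteq> 0" using m1 by simp
  have sqrt1: "sqrt (1 + 2 * q^2) = 1 / k"
  proof (rule real_sqrt_unique)
    have "(1 / k)^2 = 1 / (k * k)" by (simp add: power2_eq_square)
    also have "... = 1 / (1 - m)" unfolding sqs ..
    also have "... = 1 + 2 * q^2" unfolding q2 using k1 by (simp add: field_simps)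
    finally show "(1 / k)^2 = 1 + 2 * q^2" .
  qed (use pos in simp)
  have sqrt2: "sqrt (1 + 5 * q^2) = g / (w2 * k)"
  proof (rule real_sqrt_unique)
    have "(g / (w2 * k))^2 = (g * g) / ((w2 * w2) * (k * k))" by (simp add: power2_eq_square)
    also have "... = (2 + 3 * m) / (2 * (1 - m))" unfolding sqs ..
    also have "... = 1 + 5 * q^2" unfolding q2 using k1 by (simp add: field_simps)
    finally show "(g / (w2 * k))^2 = 1 + 5 * q^2" .
  qed (use pos in simp)
  have sqrt3: "sqrt (1 + q^2) = h / (w2 * k)"
  proof (rule real_sqrt_unique)
    have "(h / (w2 * k))^2 = (h * h) / ((w2 * w2) * (k * k))" by (simp add: power2_eq_square)
    also have "... = (2 - m) / (2 * (1 - m))" unfolding sqs ..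
    also have "... = 1 + q^2" unfolding q2 using k1 by (simp add: field_simps)
    finally show "(h / (w2 * k))^2 = 1 + q^2" .
  qed (use pos in simp)
  have pq: "p = 2 * q" unfolding p_def ..
  define A where "A = w3 * sm / w2"
  define B where "B = g / (w2 * w3)"
  define Cc where "Cc = 2 * sm / h"
  define Dd where "Dd = g / h"
  have eA: "sqrt 3 * q / sqrt (1 + 2 * q^2) = A"
    unfolding sqrt1 w3_def[symmetric] unfolding A_def q_def using pos by (simp add: field_simps)
  have eB: "sqrt (1 + 5 * q^2) / (sqrt 3 * sqrt (1 + 2 * q^2)) = B"
    unfolding sqrt1 sqrt2 B_def w3_def[symmetric] using pos by (simp add: field_simps)
  have hx1: "hex_normal p q (v3 1 1 1) = (A, v3 B B B)"
    using hex_normal_eq[OF qp pq, of 1 1 1] unfolding eA eB by simp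
  have hx2: "hex_normal p q (v3 1 1 (-1)) = (A, v3 B B (-B))"
    using hex_normal_eq[OF qp pq, of 1 1 "-1"] unfolding eA eB by simp
  have eC: "2 * q / sqrt (1 + q^2) = Cc"
    unfolding sqrt3 unfolding Cc_def q_def using pos by (simp add: field_simps)
  have eD: "sqrt (1 + 5 * q^2) / sqrt (1 + q^2) = Dd"
    unfolding sqrt2 sqrt3 Dd_def using pos by (simp add: field_simps)
  have sqn: "sq_normal p q = (Cc, v3 Dd 0 0)"
    using sq_normal_eq[OF qp pq] unfolding eC eD .
  define r where "r = g / (w2 * k)"
  define lam where "lam = (sm * g, v3 (1 + m) m m)"
  have hp: "hpoint (v3 x y z) = (r, v3 x y z)" if "x*x + y*y + z*z = 5 * q^2" for x y z
    unfolding hpoint_v3 r_def sqrt2[symmetric] using that by (simp add: add.assoc)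
  have hp1: "hpoint (v3 p q 0) = (r, v3 p q 0)" by (rule hp) (simp add: pq power2_eq_square)
  have hp2: "hpoint (v3 q p 0) = (r, v3 q p 0)" by (rule hp) (simp add: pq power2_eq_square)
  have hp3: "hpoint (v3 p 0 q) = (r, v3 p 0 q)" by (rule hp) (simp add: pq power2_eq_square)
  have hp4: "hpoint (v3 p (-q) 0) = (r, v3 p (-q) 0)" by (rule hp) (simp add: pq power2_eq_square)
  have reg: "to_regular p q"
    unfolding to_regular_def hdist_def hp1 hp2 hp3 mink_v3 by (simp add: pq)
  have smg: "(sm * g) * (sm * g) = m * (2 + 3 * m)"
  proof -
    have "(sm * g) * (sm * g) = (sm * sm) * (g * g)" by (simp add: mult_ac)
    then show ?thesis unfolding sqs .
  qed
  have L: "- (sm * g) * r + (1 + m) * p + m * q = (sm / (w2 * k)) * (- (g * g) + 2 * (1 + m) + m)"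
    unfolding r_def pq q_def using pos by (simp add: field_simps)
  have L0: "- (sm * g) * r + (1 + m) * p + m * q = 0" unfolding L sqs by simp
  have L': "- (sm * g) * r + (1 + m) * p - m * q = (sm / (w2 * k)) * (- 2 * m)"
  proof -
    have "- (sm * g) * r + (1 + m) * p - m * q = (sm / (w2 * k)) * (- (g * g) + 2 * (1 + m) - m)"
      unfolding r_def pq q_def using pos by (simp add: field_simps)
    then show ?thesis unfolding sqs by simp
  qed
  have lat: "pyr_lateral_ok p q lam"
    unfolding pyr_lateral_ok_def lam_def hp1 hp3 hp4 mink_v3
  proof (intro conjI)
    show "- (sm * g) * (sm * g) + (1 + m) * (1 + m) + m * m + m * m = 1"
      unfolding minus_mult_left[symmetric] smg by (simp add: algebra_simps)
    show "- (sm * g) * r + (1 + m) * p + m * q + m * 0 = 0" using L0 by simp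
    show "- (sm * g) * r + (1 + m) * p + m * 0 + m * q = 0" using L0 by simp
    show "- (sm * g) * r + (1 + m) * p + m * - q + m * 0 < 0"
      using L' pos m0 by (simp add: mult_pos_neg)
  qed
  have smg': "g * (g * (sm * sm)) = m * 2 + m * (m * 3)"
  proof -
    have "g * (g * (sm * sm)) = (g * g) * (sm * sm)" by (simp add: mult_ac)
    then show ?thesis unfolding sqs by (simp add: algebra_simps)
  qed
  have side: "pyr_side_angle lam = 2 * pi / real n"
  proof -
    have "- mink lam (rot90 lam) = 2 * m * m - 1"
      unfolding lam_def rot90_def by (simp add: algebra_simps smg')
    also have "... = cos (2 * pi / real n)"
      using cos_double_cos[of "pi / real n"] unfolding m_def by (simp add: power2_eq_square)
    finally have "- mink lam (rot90 lam) = cos (2 * pi / real n)" .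
    moreover have "0 \<le> 2 * pi / real n" "2 * pi / real n \<le> pi"
      using n by (simp_all add: field_simps)
    ultimately show ?thesis unfolding pyr_side_angle_def dihedral_def by (simp add: arccos_cos)
  qed
  define w where "w = w2 * w3"
  have wp: "w > 0" "w * w = 6" unfolding w_def using pos sqs
    by (simp_all add: mult_ac)
  have alpha: "to_alpha p q = arccos (m - 1/3)"
  proof -
    have "A * A = (w3 * w3) * (sm * sm) / (w2 * w2)" unfolding A_def by (simp add: field_simps)
    moreover have "B * B = (g * g) / ((w2 * w2) * (w3 * w3))" unfolding B_def by (simp add: field_simps)
    ultimately have "A * A - B * B = m - 1/3" unfolding sqs by (simp add: field_simps)
    then show ?thesis unfolding to_alpha_def dihedral_def hx1 hx2 by simp
  qed
  have beta: "to_beta p q = arccos ((3 * m - 2) / (w * h))"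
  proof -
    have "Cc * A - Dd * B = (2 * (sm * sm) * (w3 * w3) - g * g) / (h * w2 * w3)"
      unfolding Cc_def A_def Dd_def B_def using pos by (simp add: field_simps)
    also have "... = (3 * m - 2) / (w * h)" unfolding sqs w_def by (simp add: algebra_simps)
    finally have "Cc * A - Dd * B = (3 * m - 2) / (w * h)" .
    then show ?thesis unfolding to_beta_def dihedral_def sqn hx1 by simp
  qed
  have gamma: "pyr_gamma p q lam = arccos (g * (1 - m) / h)"
  proof -
    have "Dd * (1 + m) - Cc * (sm * g) = g * ((1 + m) - 2 * (sm * sm)) / h"
      unfolding Cc_def Dd_def using pos by (simp add: field_simps)
    also have "... = g * (1 - m) / h" unfolding sqs by simp
    finally have "Dd * (1 + m) - Cc * (sm * g) = g * (1 - m) / h" .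
    then show ?thesis unfolding pyr_gamma_def dihedral_def sqn lam_def by (simp add: algebra_simps)
  qed
  have sum: "to_alpha p q + 2 * to_beta p q + 2 * pyr_gamma p q lam = 2 * pi"
    unfolding alpha beta gamma
    by (rule angle_id[OF m0 m1 pos(3) sqs(3) pos(4) sqs(4) pos(5) sqs(5) wp])
  have "KP_data n p q lam"
    unfolding KP_data_def using qp pq reg lat side sum by simp
  then show ?thesis by blast
qed

theorem mainTheorem13:
  fixes n :: nat
  assumes "n \<ge> 4"
  shows "(\<exists>p q lam. KP_data n p q lam) \<and>
         (\<forall>p q lam. KP_data n p q lam \<longrightarrow>
            (\<exists>t>0. hconv (oct_verts t) \<subseteq> KP_set p q lam
                 \<and> (\<forall>\<sigma>\<in>sign_vecs. sym_antiprism_over p q t \<sigma>)))"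
proof (intro conjI allI impI)
  show "\<exists>p q lam. KP_data n p q lam" by (rule part1[OF assms])
next
  fix p q lam assume KP: "KP_data n p q lam"
  then have q: "0 < q" "q < p" "to_regular p q" unfolding KP_data_def by auto
  have p: "p = 2 * q" by (rule reg_p[OF q])
  show "\<exists>t>0. hconv (oct_verts t) \<subseteq> KP_set p q lam \<and> (\<forall>\<sigma>\<in>sign_vecs. sym_antiprism_over p q t \<sigma>)"
    by (rule part2[OF q(1) p])
qed

end
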